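(* Let $1<p<\infty$ and $W:\mathbb{M}^{3\times3}\to[0,+\infty]$ satisfy (H1)–(H5) below. Let $\Omega\subset\mathbb{R}^2$ be open and bounded, $\eta>0$, and $G:\overline\Omega\to\mathbb{M}^{3\times2}$ uniformly continuous with $|G^1(x)\wedge G^2(x)|\geq\eta$ for every $x\in\overline\Omega$. Then there exists $\beta=\beta(\eta,\|G\|_{L^\infty})$ such that $$\int_\Omega W_0(G(x))\,dx=\inf\Big\{\int_\Omega W(G(x)|\phi(x))\,dx:\ \phi\in C^\infty(\overline\Omega,\mathbb{R}^3),\ \det(G(x)|\phi(x))\geq\tfrac1\beta\text{ for }x\in\overline\Omega,\ \|\phi\|_{L^\infty}\leq\beta\Big\}.$$
   Context: Hypotheses: (H1) $W$ continuous as a $[0,+\infty]$-valued function; (H2) $W(RF)=W(F)$ for $R\in SO(3)$; (H3) $W(F)<\infty$ if $\det F>0$ and $W(F)=+\infty$ if $\det F\leq0$; (H4) $W(F)\geq C_1|F|^p-1/C_1$; (H5) for each $\delta>0$, $W(F)\leq c_\delta(1+|F|^p)$ when $\det F\geq\delta$. $W_0(A):=\inf_{\xi\in\mathbb{R}^3}W(A|\xi)$ for $A\in\mathbb{M}^{3\times2}$, where $(A|\xi)$ is the $3\times3$ matrix with columns $A^1,A^2,\xi$; $\wedge$ is the vector product. *)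

theory Defs
  imports "HOL-Analysis.Analysis"
begin

definition augm :: "real^2^3 \<Rightarrow> real^3 \<Rightarrow> real^3^3" where
  "augm A \<xi> = (\<chi> i j. if j = 1 then A$i$1 else if j = 2 then A$i$2 else \<xi>$i)"

definition W0 :: "(real^3^3 \<Rightarrow> ennreal) \<Rightarrow> real^2^3 \<Rightarrow> ennreal" where
  "W0 W A = (INF \<xi>. W (augm A \<xi>))"

fun Ck :: "nat \<Rightarrow> (real^2 \<Rightarrow> real^3) \<Rightarrow> bool" where
  "Ck 0 f = continuous_on UNIV f"
| "Ck (Suc k) f = (\<exists>f'. (\<forall>x. (f has_derivative f' x) (at x)) \<and>
                        (\<forall>i. Ck k (\<lambda>x. f' x (axis i 1))))"

definition smooth :: "(real^2 \<Rightarrow> real^3) \<Rightarrow> bool" where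
  "smooth f \<longleftrightarrow> (\<forall>k. Ck k f)"

end

theory Submission
  imports Defs
begin

lemma det_augm: "det (augm A \<xi>) = \<xi> \<bullet> cross3 (column 1 A) (column 2 A)"
  unfolding augm_def by (simp add: det_3 cross3_def inner_vec_def sum_3 column_def algebra_simps)

lemma norm_sq_cartv: "(norm (x::'a::real_normed_vector^'n))^2 = (\<Sum>i\<in>UNIV. (norm (x$i))^2)"
  by (simp add: norm_vec_def L2_set_def sum_nonneg)

lemma norm_sq_cart: "(norm (x::real^'n))^2 = (\<Sum>i\<in>UNIV. (x$i)^2)"
  by (simp add: norm_vec_def L2_set_def sum_nonneg)

lemma norm_augm_sq: "(norm (augm A \<xi>))^2 = (norm A)^2 + (norm \<xi>)^2"
proof -
  have "(norm (augm A \<xi>))^2 = (\<Sum>i\<in>UNIV. (norm (augm A \<xi> $ i))^2)" by (rule norm_sq_cartv)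
  also have "\<dots> = (\<Sum>i\<in>UNIV. (norm (A$i))^2 + (\<xi>$i)^2)"
    by (rule sum.cong) (auto simp: norm_sq_cart augm_def sum_3 sum_2)
  also have "\<dots> = (norm A)^2 + (norm \<xi>)^2"
    by (simp add: sum.distrib norm_sq_cartv[of A] norm_sq_cart[of \<xi>])
  finally show ?thesis .
qed

lemma norm_xi_le_augm: "norm \<xi> \<le> norm (augm A \<xi>)"
  by (metis norm_augm_sq norm_ge_zero power2_le_imp_le le_add_same_cancel2 zero_le_power2)

lemma norm_augm_le: "norm (augm A \<xi>) \<le> norm A + norm \<xi>"
proof -
  have "(norm (augm A \<xi>))^2 \<le> (norm A + norm \<xi>)^2"
    unfolding norm_augm_sq by (simp add: power2_sum)
  then show ?thesis by (rule power2_le_imp_le) simp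
qed

lemma norm_column_sq_le: "(norm (column j (A::real^2^3)))^2 \<le> (norm A)^2"
proof -
  have "(norm (column j A))^2 = (\<Sum>i\<in>UNIV. (A$i$j)^2)" by (simp add: norm_sq_cart column_def)
  also have "\<dots> \<le> (\<Sum>i\<in>UNIV. (norm (A$i))^2)"
  proof (rule sum_mono)
    fix i show "(A$i$j)^2 \<le> (norm (A$i))^2"
      using component_le_norm_cart[of "A$i" j] by (metis abs_ge_zero power2_abs power_mono)
  qed
  also have "\<dots> = (norm A)^2" by (simp add: norm_sq_cartv)
  finally show ?thesis .
qed

lemma norm_column_le: "norm (column j (A::real^2^3)) \<le> norm A"
  using norm_column_sq_le by (metis norm_ge_zero power2_le_imp_le)

lemma continuous_on_augm[continuous_intros]:
  assumes "continuous_on S f" "continuous_on S g"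
  shows "continuous_on S (\<lambda>x. augm (f x) (g x))"
  unfolding augm_def
proof (intro continuous_on_vec_lambda)
  fix i j
  show "continuous_on S (\<lambda>x. if j = 1 then f x $ i $ 1 else if j = 2 then f x $ i $ 2 else g x $ i)"
    by (cases "j = 1"; cases "j = 2") (simp_all add: continuous_on_component assms)
qed

lemma real_poly_deriv:
  fixes p :: "'a::real_normed_vector \<Rightarrow> real"
  assumes "real_polynomial_function p"
  shows "\<exists>p'. (\<forall>x. (p has_derivative p' x) (at x)) \<and> (\<forall>v. real_polynomial_function (\<lambda>x. p' x v))"
  using assms
proof (induct p)
  case (linear f)
  then show ?case
    by (rule_tac x="\<lambda>x. f" in exI) (auto intro: bounded_linear_imp_has_derivative)
next
  case (const c)
  show ?case by (rule_tac x="\<lambda>x v. 0" in exI) auto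
next
  case (add f g)
  then obtain f' g' where "\<And>x. (f has_derivative f' x) (at x)" "\<And>v. real_polynomial_function (\<lambda>x. f' x v)"
    "\<And>x. (g has_derivative g' x) (at x)" "\<And>v. real_polynomial_function (\<lambda>x. g' x v)" by blast
  then show ?case
    by (rule_tac x="\<lambda>x v. f' x v + g' x v" in exI) (auto intro!: derivative_eq_intros)
next
  case (mult f g)
  then obtain f' g' where f': "\<And>x. (f has_derivative f' x) (at x)" "\<And>v. real_polynomial_function (\<lambda>x. f' x v)"
    and g': "\<And>x. (g has_derivative g' x) (at x)" "\<And>v. real_polynomial_function (\<lambda>x. g' x v)" by blast
  have "((\<lambda>x. f x * g x) has_derivative (\<lambda>v. f x * g' x v + f' x v * g x)) (at x)" for x
    by (rule has_derivative_mult[OF f'(1) g'(1)])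
  moreover have "real_polynomial_function (\<lambda>x. f x * g' x v + f' x v * g x)" for v
    by (intro real_polynomial_function.intros(3) real_polynomial_function.intros(4) mult.hyps f'(2) g'(2))
  ultimately show ?case by (rule_tac x="\<lambda>x v. f x * g' x v + f' x v * g x" in exI) simp
qed

lemma poly_comp_nth: "polynomial_function (f::'a::euclidean_space \<Rightarrow> real^'n) \<Longrightarrow> real_polynomial_function (\<lambda>x. f x $ i)"
  using polynomial_function_inner[of f "axis i 1"] by (simp add: inner_axis real_polynomial_function_eq)

lemma poly_vec_lambda: "(\<And>i. real_polynomial_function (g i)) \<Longrightarrow> polynomial_function (\<lambda>x::'a::euclidean_space. (\<chi> i. g i x)::real^'n)"
  unfolding polynomial_function_iff_Basis_inner
  by (auto simp: Basis_vec_def inner_axis)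

lemma vec_poly_deriv:
  fixes f :: "real^2 \<Rightarrow> real^3"
  assumes "polynomial_function f"
  shows "\<exists>f'. (\<forall>x. (f has_derivative f' x) (at x)) \<and> (\<forall>v. polynomial_function (\<lambda>x. f' x v))"
proof -
  have "\<forall>i. \<exists>p'. (\<forall>x. ((\<lambda>x. f x $ i) has_derivative p' x) (at x)) \<and> (\<forall>v. real_polynomial_function (\<lambda>x. p' x v))"
    using real_poly_deriv[OF poly_comp_nth[OF assms]] by blast
  then obtain p' where p'0: "\<forall>i. (\<forall>x. ((\<lambda>x. f x $ i) has_derivative p' i x) (at x)) \<and> (\<forall>v. real_polynomial_function (\<lambda>x. p' i x v))"
    by (rule choice[THEN exE])
  have p': "((\<lambda>x. f x $ i) has_derivative p' i x) (at x)" "real_polynomial_function (\<lambda>x. p' i x v)" for i x v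
    using p'0 by simp_all
  have D: "(f has_derivative (\<lambda>v. \<chi> i. p' i x v)) (at x)" for x
  proof -
    have "((\<lambda>x. f x \<bullet> axis j 1) has_derivative (\<lambda>v. (\<chi> i. p' i x v) \<bullet> axis j 1)) (at x)" for j
      unfolding inner_axis using p'(1)[of j x] by simp
    then show ?thesis
      unfolding has_derivative_componentwise_within[of f] Basis_vec_def Basis_real_def by blast
  qed
  have P: "polynomial_function (\<lambda>x. \<chi> i. p' i x v)" for v
    by (rule poly_vec_lambda) (rule p'(2))
  show ?thesis
    apply (rule exI[of _ "\<lambda>x v. \<chi> i. p' i x v"])
    using D P by blast
qed

lemma poly_Ck: "polynomial_function (f::real^2 \<Rightarrow> real^3) \<Longrightarrow> Ck k f"
proof (induction k arbitrary: f)
  case 0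
  then show ?case by (simp add: continuous_on_polymonial_function)
next
  case (Suc k)
  obtain f' where f': "\<forall>x. (f has_derivative f' x) (at x)" "\<forall>v. polynomial_function (\<lambda>x. f' x v)"
    using vec_poly_deriv[OF Suc.prems] by (elim exE conjE)
  have "\<forall>i. Ck k (\<lambda>x. f' x (axis i 1))" using Suc.IH f'(2) by blast
  then show ?case using f'(1) by (simp only: Ck.simps) blast
qed

lemma poly_smooth: "polynomial_function f \<Longrightarrow> smooth f"
  unfolding smooth_def using poly_Ck by blast

definition nG :: "real^2^3 \<Rightarrow> real^3" where
  "nG A = cross3 (column 1 A) (column 2 A)"

lemma det_augm_nG: "det (augm A \<xi>) = \<xi> \<bullet> nG A"
  by (simp add: det_augm nG_def)

lemma continuous_on_column[continuous_intros]:
  "continuous_on S f \<Longrightarrow> continuous_on S (\<lambda>x. column j (f x :: real^'m^'n))"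
  unfolding column_def by (intro continuous_on_vec_lambda continuous_on_component)

lemma continuous_on_nG[continuous_intros]:
  fixes f :: "'a::t2_space \<Rightarrow> real^2^3"
  shows "continuous_on S f \<Longrightarrow> continuous_on S (\<lambda>x. nG (f x))"
  unfolding nG_def by (intro continuous_on_cross continuous_on_column)

lemma continuous_on_det3: "continuous_on UNIV (\<lambda>F::real^3^3. det F)"
  by (simp only: det_3) (intro continuous_intros)

lemma norm_nG_le: "norm (nG A) \<le> (norm A)^2"
proof -
  have "(norm (nG A))^2 \<le> (norm (column 1 A) * norm (column 2 A))^2"
    using norm_cross_dot[of "column 1 A" "column 2 A"] unfolding nG_def
    by (metis le_add_same_cancel1 zero_le_power2)
  then have "norm (nG A) \<le> norm (column 1 A) * norm (column 2 A)"
    by (rule power2_le_imp_le) simp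
  also have "\<dots> \<le> norm A * norm A"
    by (intro mult_mono norm_column_le) auto
  finally show ?thesis by (simp add: power2_eq_square)
qed

lemma W0_le: "W0 W A \<le> W (augm A \<xi>)"
  unfolding W0_def by (rule INF_lower) simp

lemma constants:
  fixes W :: "real^3^3 \<Rightarrow> ennreal" and p \<eta> M :: real
  assumes p: "1 < p"
    and H1: "continuous_on UNIV W"
    and H3a: "\<And>F. det F > 0 \<Longrightarrow> W F < \<infinity>"
    and H3b: "\<And>F. det F \<le> 0 \<Longrightarrow> W F = \<infinity>"
    and H4: "\<exists>C1>0. \<forall>F. W F \<ge> ennreal (C1 * norm F powr p - 1 / C1)"
    and eta: "\<eta> > 0"
  shows "\<exists>K0 R1 \<delta>0 N. K0 \<ge> 0 \<and> R1 > 0 \<and> \<delta>0 > 0 \<and> N > 0 \<and>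
     (\<forall>A. norm A \<le> M \<and> \<eta> \<le> norm (nG A) \<longrightarrow> W0 W A \<le> ennreal K0 \<and> norm (nG A) \<le> N) \<and>
     (\<forall>F. W F \<le> ennreal (K0+1) \<longrightarrow> norm F \<le> R1 \<and> \<delta>0 \<le> det F)"
proof -
  define KA where "KA = {A. norm A \<le> M \<and> \<eta> \<le> norm (nG A)}"
  have KA_eq: "KA = cball 0 M \<inter> {A. \<eta> \<le> norm (nG A)}" by (auto simp: KA_def)
  have "closed {A. \<eta> \<le> norm (nG A)}"
    by (intro closed_Collect_le continuous_intros)
  then have cKA: "compact KA" unfolding KA_eq by (intro compact_Int_closed) auto
  define f where "f A = W (augm A (nG A))" for A
  have contf: "continuous_on KA f"
    unfolding f_def by (rule continuous_on_compose2[OF H1]) (auto intro!: continuous_intros)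
  obtain K0 where K0: "K0 \<ge> 0" "\<And>A. A \<in> KA \<Longrightarrow> f A \<le> ennreal K0"
  proof (cases "KA = {}")
    case True then show ?thesis using that[of 0] by auto
  next
    case False
    have "compact (f ` KA)" by (rule compact_continuous_image[OF contf cKA])
    then obtain s where s: "s \<in> f ` KA" "\<And>t. t \<in> f ` KA \<Longrightarrow> t \<le> s"
      using compact_attains_sup[of "f ` KA"] False by blast
    then obtain A0 where A0: "A0 \<in> KA" "s = f A0" by auto
    have "det (augm A0 (nG A0)) = (norm (nG A0))^2" by (simp add: det_augm_nG power2_norm_eq_inner)
    also have "\<dots> > 0" using A0 eta unfolding KA_def by auto
    finally have "s < \<infinity>" using H3a A0 unfolding f_def by auto
    then show ?thesis using s that[of "enn2real s"] by (auto simp: ennreal_enn2real_if)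
  qed
  have W0K: "W0 W A \<le> ennreal K0" if "A \<in> KA" for A
    using W0_le[of W A "nG A"] K0(2)[OF that] unfolding f_def by (rule order.trans)
  obtain C1 where C1: "C1 > 0" "\<And>F. W F \<ge> ennreal (C1 * norm F powr p - 1 / C1)" using H4 by blast
  define R1 where "R1 = max 1 ((K0 + 1 + 1/C1) / C1)"
  have R1: "norm F \<le> R1" if "W F \<le> ennreal (K0+1)" for F
  proof -
    have "ennreal (C1 * norm F powr p - 1 / C1) \<le> ennreal (K0+1)" using C1(2)[of F] that by (rule order.trans)
    moreover have "0 \<le> K0 + 1" using K0(1) by simp
    ultimately have "C1 * norm F powr p - 1 / C1 \<le> K0 + 1" using ennreal_le_iff by blast
    then have "C1 * norm F powr p \<le> K0 + 1 + 1/C1" by simp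
    then have Q: "norm F powr p \<le> (K0 + 1 + 1/C1) / C1" using C1(1) by (simp add: field_simps)
    show ?thesis
    proof (cases "norm F \<le> 1")
      case True then show ?thesis by (simp add: R1_def)
    next
      case False
      then have "norm F = norm F powr 1" by simp
      also have "\<dots> \<le> norm F powr p" using False p by (intro powr_mono) auto
      finally show ?thesis using Q by (simp add: R1_def)
    qed
  qed
  define S where "S = cball 0 R1 \<inter> {F. W F \<le> ennreal (K0+1)}"
  have "closed {F. W F \<le> ennreal (K0+1)}"
    by (intro closed_Collect_le H1 continuous_intros)
  then have cS: "compact S" unfolding S_def by (intro compact_Int_closed) auto
  obtain \<delta>0 where d0: "\<delta>0 > 0" "\<And>F. F \<in> S \<Longrightarrow> \<delta>0 \<le> det F"
  proof (cases "S = {}")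
    case True then show ?thesis using that[of 1] by auto
  next
    case False
    obtain F0 where F0: "F0 \<in> S" "\<And>F. F \<in> S \<Longrightarrow> det F0 \<le> det F"
      using continuous_attains_inf[OF cS False continuous_on_subset[OF continuous_on_det3]] by auto
    have "W F0 < \<infinity>" using F0(1) unfolding S_def by (auto simp: top_unique intro: le_less_trans)
    then have "det F0 > 0" using H3b by (metis not_le order_less_irrefl)
    then show ?thesis using that[of "det F0"] F0 by auto
  qed
  define N where "N = M^2 + 1"
  have Rp: "R1 > 0" by (auto simp: R1_def)
  have Np: "N > 0" unfolding N_def by (metis add_pos_nonneg zero_less_one zero_le_power2 add.commute)
  have A1: "\<forall>A. norm A \<le> M \<and> \<eta> \<le> norm (nG A) \<longrightarrow> W0 W A \<le> ennreal K0 \<and> norm (nG A) \<le> N"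
  proof (intro allI impI conjI)
    fix A assume A: "norm A \<le> M \<and> \<eta> \<le> norm (nG A)"
    then show "W0 W A \<le> ennreal K0" using W0K unfolding KA_def by auto
    have "norm (nG A) \<le> (norm A)^2" by (rule norm_nG_le)
    also have "\<dots> \<le> M^2" using A by (intro power_mono) auto
    finally show "norm (nG A) \<le> N" by (simp add: N_def)
  qed
  have F1: "\<forall>F. W F \<le> ennreal (K0+1) \<longrightarrow> norm F \<le> R1 \<and> \<delta>0 \<le> det F"
  proof (intro allI impI)
    fix F assume F: "W F \<le> ennreal (K0+1)"
    then have "norm F \<le> R1" by (rule R1)
    then show "norm F \<le> R1 \<and> \<delta>0 \<le> det F" using d0(2) F unfolding S_def by auto
  qed
  show ?thesis using K0(1) d0(1) Rp Np A1 F1 by blast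
qed

lemma LIMSEQ_by_dist:
  fixes X :: "nat \<Rightarrow> 'a::metric_space"
  assumes "\<And>j. dist (X j) L < inverse (real (Suc j))"
  shows "X \<longlonglongrightarrow> L"
proof -
  have "(\<lambda>j. dist (X j) L) \<longlonglongrightarrow> 0"
  proof (rule tendsto_sandwich[of "\<lambda>j. 0" _ _ "\<lambda>j. inverse (real (Suc j))"])
    show "\<forall>\<^sub>F n in sequentially. 0 \<le> dist (X n) L" by simp
    show "\<forall>\<^sub>F n in sequentially. dist (X n) L \<le> inverse (real (Suc n))"
      using assms by (simp add: less_imp_le)
    show "(\<lambda>j. inverse (real (Suc j))) \<longlonglongrightarrow> 0" by (rule LIMSEQ_inverse_real_of_nat)
  qed simp
  then show ?thesis using tendsto_dist_iff by blast
qed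

lemma dense_seq: "\<exists>d::nat \<Rightarrow> real^3. \<forall>\<xi> e. e > 0 \<longrightarrow> (\<exists>k. dist (d k) \<xi> < e)"
proof -
  obtain D :: "(real^3) set" where D: "countable D" "\<And>X. open X \<Longrightarrow> X \<noteq> {} \<Longrightarrow> \<exists>d\<in>D. d \<in> X"
    using countable_dense_setE by blast
  have "D \<noteq> {}" using D(2)[of UNIV] by auto
  then have r: "range (from_nat_into D) = D" using D(1) by (rule range_from_nat_into)
  show ?thesis
  proof (rule exI[of _ "from_nat_into D"], intro allI impI)
    fix \<xi> :: "real^3" and e :: real assume "e > 0"
    then obtain y where "y \<in> D" "y \<in> ball \<xi> e" using D(2)[of "ball \<xi> e"] by auto
    then obtain k where "y = from_nat_into D k" using r by (metis imageE)
    then show "\<exists>k. dist (from_nat_into D k) \<xi> < e" using \<open>y \<in> ball \<xi> e\<close> by (auto simp: dist_commute)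
  qed
qed

lemma W0_seq:
  assumes H1: "continuous_on UNIV W"
    and d: "\<forall>\<xi> e. e > 0 \<longrightarrow> (\<exists>k. dist (d k) \<xi> < e)"
  shows "W0 W A = (INF k. W (augm A (d k)))"
proof (rule antisym)
  show "W0 W A \<le> (INF k. W (augm A (d k)))"
    unfolding W0_def by (rule INF_mono) auto
  show "(INF k. W (augm A (d k))) \<le> W0 W A"
    unfolding W0_def
  proof (rule INF_greatest)
    fix \<xi> :: "real^3"
    have "\<forall>j. \<exists>k. dist (d k) \<xi> < inverse (real (Suc j))" using d by simp
    then obtain kk where kk: "\<And>j. dist (d (kk j)) \<xi> < inverse (real (Suc j))" by metis
    have lim: "(\<lambda>j. d (kk j)) \<longlonglongrightarrow> \<xi>" by (rule LIMSEQ_by_dist) (rule kk)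
    have c: "continuous_on UNIV (\<lambda>\<zeta>. W (augm A \<zeta>))"
      by (rule continuous_on_compose2[OF H1]) (auto intro!: continuous_intros)
    have "(\<lambda>j. W (augm A (d (kk j)))) \<longlonglongrightarrow> W (augm A \<xi>)"
      by (rule continuous_on_tendsto_compose[OF c lim]) auto
    then show "(INF k. W (augm A (d k))) \<le> W (augm A \<xi>)"
      by (rule LIMSEQ_le_const) (auto intro: INF_lower)
  qed
qed

definition cl :: "real \<Rightarrow> real^3 \<Rightarrow> real^3" where
  "cl R \<xi> = (R / max R (norm \<xi>)) *\<^sub>R \<xi>"

definition hp :: "real \<Rightarrow> real^3 \<Rightarrow> real^3 \<Rightarrow> real^3" where
  "hp \<delta> n \<xi> = \<xi> + (max 0 (\<delta> - \<xi> \<bullet> n) / (n \<bullet> n)) *\<^sub>R n"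

lemma cl_norm: "R > 0 \<Longrightarrow> norm (cl R \<xi>) \<le> R"
proof -
  assume R: "R > 0"
  have "norm (cl R \<xi>) = R / max R (norm \<xi>) * norm \<xi>" using R by (simp add: cl_def)
  also have "\<dots> \<le> R"
  proof (cases "norm \<xi> \<le> R")
    case True then show ?thesis using R by (simp add: max_def)
  next
    case False then show ?thesis using R by (simp add: max_def)
  qed
  finally show ?thesis .
qed

lemma cl_id: "R > 0 \<Longrightarrow> norm \<xi> \<le> R \<Longrightarrow> cl R \<xi> = \<xi>"
  by (simp add: cl_def max_def)

lemma cl_cont[continuous_intros]: "R > 0 \<Longrightarrow> continuous_on S f \<Longrightarrow> continuous_on S (\<lambda>x. cl R (f x))"
  unfolding cl_def by (intro continuous_intros) auto

lemma hp_inner: "n \<noteq> 0 \<Longrightarrow> hp \<delta> n \<xi> \<bullet> n \<ge> \<delta>"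
  by (simp add: hp_def inner_add_left)

lemma hp_id: "\<xi> \<bullet> n \<ge> \<delta> \<Longrightarrow> hp \<delta> n \<xi> = \<xi>"
  by (simp add: hp_def)

lemma hp_norm:
  assumes "n \<noteq> 0" "\<delta> > 0"
  shows "norm (hp \<delta> n \<xi>) \<le> 2 * norm \<xi> + \<delta> / norm n"
proof -
  have nn: "n \<bullet> n = (norm n)^2" by (simp add: power2_norm_eq_inner)
  have np: "norm n > 0" using assms by simp
  have "norm (hp \<delta> n \<xi>) \<le> norm \<xi> + norm ((max 0 (\<delta> - \<xi> \<bullet> n) / (n \<bullet> n)) *\<^sub>R n)"
    unfolding hp_def by (rule norm_triangle_ineq)
  also have "norm ((max 0 (\<delta> - \<xi> \<bullet> n) / (n \<bullet> n)) *\<^sub>R n) = max 0 (\<delta> - \<xi> \<bullet> n) / norm n"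
    using np by (simp add: nn power2_eq_square)
  also have "max 0 (\<delta> - \<xi> \<bullet> n) \<le> \<delta> + norm \<xi> * norm n"
    using norm_cauchy_schwarz[of "-\<xi>" n] assms(2) by (simp add: inner_minus_left)
  then have "max 0 (\<delta> - \<xi> \<bullet> n) / norm n \<le> (\<delta> + norm \<xi> * norm n) / norm n"
    using np by (simp add: divide_right_mono)
  also have "(\<delta> + norm \<xi> * norm n) / norm n = \<delta> / norm n + norm \<xi>"
    using np by (simp add: field_simps)
  finally show ?thesis by simp
qed

lemma hp_cont[continuous_intros]:
  assumes "continuous_on S f" "continuous_on S g" "\<And>x. x \<in> S \<Longrightarrow> f x \<noteq> 0"
  shows "continuous_on S (\<lambda>x. hp \<delta> (f x) (g x))"
  unfolding hp_def using assms by (intro continuous_intros) auto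

lemma main_upper:
  fixes W :: "real^3^3 \<Rightarrow> ennreal" and p \<eta> M K0 R1 \<delta>0 N \<beta> :: real
    and \<Omega> :: "(real^2) set" and G :: "real^2 \<Rightarrow> real^2^3"
  assumes p: "1 < p"
    and H1: "continuous_on UNIV W"
    and H5: "\<And>\<delta>. \<delta> > 0 \<Longrightarrow> \<exists>c. \<forall>F. det F \<ge> \<delta> \<longrightarrow> W F \<le> ennreal (c * (1 + norm F powr p))"
    and eta: "\<eta> > 0" and K0: "K0 \<ge> 0" and R1: "R1 > 0" and d0: "\<delta>0 > 0" and Np: "N > 0"
    and hA: "\<forall>A. norm A \<le> M \<and> \<eta> \<le> norm (nG A) \<longrightarrow> W0 W A \<le> ennreal K0 \<and> norm (nG A) \<le> N"
    and hF: "\<forall>F. W F \<le> ennreal (K0+1) \<longrightarrow> norm F \<le> R1 \<and> \<delta>0 \<le> det F"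
    and beta: "\<beta> = max (2*R1 + \<delta>0/\<eta> + 1) (2/\<delta>0)"
    and Om: "open \<Omega>" "bounded \<Omega>" and Gu: "uniformly_continuous_on (closure \<Omega>) G"
    and Gn: "\<forall>x\<in>closure \<Omega>. norm (cross3 (column 1 (G x)) (column 2 (G x))) \<ge> \<eta>"
    and GM: "(SUP x\<in>closure \<Omega>. norm (G x)) = M"
  shows "(INF \<phi>\<in>{\<phi>. smooth \<phi> \<and> (\<forall>x\<in>closure \<Omega>. det (augm (G x) (\<phi> x)) \<ge> 1 / \<beta>)
                            \<and> (\<forall>x\<in>closure \<Omega>. norm (\<phi> x) \<le> \<beta>)}.
                  (\<integral>\<^sup>+ x. W (augm (G x) (\<phi> x)) * indicator \<Omega> x \<partial>lborel))
         \<le> (\<integral>\<^sup>+ x. W0 W (G x) * indicator \<Omega> x \<partial>lborel)"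
    (is "?R \<le> ?L")
proof -
  define C where "C = {\<phi>. smooth \<phi> \<and> (\<forall>x\<in>closure \<Omega>. det (augm (G x) (\<phi> x)) \<ge> 1 / \<beta>)
                            \<and> (\<forall>x\<in>closure \<Omega>. norm (\<phi> x) \<le> \<beta>)}"
  have cO: "compact (closure \<Omega>)" using Om(2) by (simp add: compact_closure)
  have contG: "continuous_on (closure \<Omega>) G" using Gu by (rule uniformly_continuous_imp_continuous)
  have normG: "norm (G x) \<le> M" if "x \<in> closure \<Omega>" for x
  proof -
    have "compact ((\<lambda>x. norm (G x)) ` closure \<Omega>)"
      by (intro compact_continuous_image continuous_intros contG cO)
    then have "bdd_above ((\<lambda>x. norm (G x)) ` closure \<Omega>)"
      by (intro bounded_imp_bdd_above compact_imp_bounded)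
    then show ?thesis using cSUP_upper[OF that] GM by metis
  qed
  have GK: "W0 W (G x) \<le> ennreal K0" "norm (nG (G x)) \<le> N" "\<eta> \<le> norm (nG (G x))"
    if "x \<in> closure \<Omega>" for x
    using hA normG[OF that] Gn that unfolding nG_def by auto
  obtain G' where G': "continuous_on UNIV G'" "\<And>x. x \<in> closure \<Omega> \<Longrightarrow> G' x = G x"
    using Tietze_unbounded[OF contG, of UNIV] by auto
  have GK': "W0 W (G' x) \<le> ennreal K0" "norm (nG (G' x)) \<le> N" "\<eta> \<le> norm (nG (G' x))"
    if "x \<in> closure \<Omega>" for x
    using GK[OF that] G'(2)[OF that] by auto
  have mOm[measurable]: "\<Omega> \<in> sets borel" using Om(1) by simp
  have fin: "emeasure lborel \<Omega> < \<infinity>" using Om(2) by (rule emeasure_bounded_finite)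
  obtain d :: "nat \<Rightarrow> real^3" where d: "\<forall>\<xi> e. e > 0 \<longrightarrow> (\<exists>k. dist (d k) \<xi> < e)"
    using dense_seq by blast
  have Wd: "W0 W A = (INF k. W (augm A (d k)))" for A using W0_seq[OF H1 d] .
  have cWG: "continuous_on UNIV (\<lambda>x. W (augm (G' x) (f x)))" if "continuous_on UNIV f" for f
    by (rule continuous_on_compose2[OF H1]) (auto intro!: continuous_intros that G'(1))
  have mWk[measurable]: "(\<lambda>x. W (augm (G' x) (d k))) \<in> borel_measurable borel" for k
    by (rule borel_measurable_continuous_onI, rule cWG) simp
  have mW0[measurable]: "(\<lambda>x. W0 W (G' x)) \<in> borel_measurable borel"
    unfolding Wd by measurable
  have core: "?R \<le> (\<integral>\<^sup>+ x. (W0 W (G' x) + ennreal \<epsilon>) * indicator \<Omega> x \<partial>lborel)"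
    if e: "0 < \<epsilon>" "\<epsilon> \<le> 1" for \<epsilon>
  proof -
    define Q where "Q k x \<longleftrightarrow> W (augm (G' x) (d k)) < W0 W (G' x) + ennreal \<epsilon>" for k x
    define kk where "kk x = (LEAST k. Q k x)" for x
    define \<phi>0 where "\<phi>0 x = d (kk x)" for x
    have mQ[measurable]: "Measurable.pred borel (Q k)" for k unfolding Q_def by measurable
    have mkk[measurable]: "kk \<in> measurable borel (count_space UNIV)" unfolding kk_def by measurable
    have m\<phi>0: "\<phi>0 \<in> borel_measurable borel"
      unfolding \<phi>0_def by (rule measurable_compose_countable[where f="\<lambda>i x. d i"]) auto
    have exQ: "\<exists>k. Q k x" if x: "x \<in> closure \<Omega>" for x
    proof -
      have "W0 W (G' x) < top" using GK'(1)[OF x] by (metis ennreal_less_top le_less_trans)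
      then obtain r where r: "W0 W (G' x) = ennreal r" "r \<ge> 0"
        by (cases "W0 W (G' x)" rule: ennreal_cases) auto
      have "W0 W (G' x) < W0 W (G' x) + ennreal \<epsilon>"
        using r e by (simp add: ennreal_plus[symmetric] ennreal_less_iff del: ennreal_plus)
      then have "(INF k. W (augm (G' x) (d k))) < W0 W (G' x) + ennreal \<epsilon>" by (simp add: Wd[symmetric])
      then show ?thesis unfolding Q_def INF_less_iff by auto
    qed
    have \<phi>0W: "W (augm (G' x) (\<phi>0 x)) < W0 W (G' x) + ennreal \<epsilon>" if "x \<in> closure \<Omega>" for x
      using LeastI_ex[OF exQ[OF that]] unfolding \<phi>0_def kk_def Q_def .
    have \<phi>0b: "norm (\<phi>0 x) \<le> R1 \<and> \<phi>0 x \<bullet> nG (G' x) \<ge> \<delta>0" if "x \<in> closure \<Omega>" for x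
    proof -
      have "W (augm (G' x) (\<phi>0 x)) \<le> W0 W (G' x) + ennreal \<epsilon>" using \<phi>0W[OF that] by simp
      also have "\<dots> \<le> ennreal K0 + ennreal 1" using GK'(1)[OF that] e by (intro add_mono) auto
      also have "\<dots> = ennreal (K0 + 1)" using K0 by (simp add: ennreal_plus)
      finally have "norm (augm (G' x) (\<phi>0 x)) \<le> R1 \<and> \<delta>0 \<le> det (augm (G' x) (\<phi>0 x))" using hF by blast
      then show ?thesis using norm_xi_le_augm[of "\<phi>0 x" "G' x"] by (auto simp: det_augm_nG)
    qed
    have "\<phi>0 \<in> borel_measurable lebesgue" by (rule measurable_completion) (simp add: m\<phi>0)
    moreover have "\<Omega> \<in> sets lebesgue" by simp
    ultimately have "\<phi>0 measurable_on \<Omega>" by (rule lebesgue_measurable_imp_measurable_on)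
    then obtain Nn F where Nn: "negligible Nn" and cF: "\<And>n. continuous_on UNIV (F n)"
      and limF: "\<And>x. x \<notin> Nn \<Longrightarrow> (\<lambda>n. F n x) \<longlonglongrightarrow> (if x \<in> \<Omega> then \<phi>0 x else 0)"
      unfolding measurable_on_def by blast
    define \<psi> where "\<psi> x \<xi> = hp \<delta>0 (nG (G' x)) (cl R1 \<xi>)" for x \<xi>
    define \<phi>k where "\<phi>k k x = \<psi> x (F k x)" for k x
    have nz: "nG (G' x) \<noteq> 0" if "x \<in> closure \<Omega>" for x using GK'(3)[OF that] eta by auto
    have c\<phi>k: "continuous_on (closure \<Omega>) (\<phi>k k)" for k
      unfolding \<phi>k_def \<psi>_def
      by (intro continuous_intros R1 continuous_on_subset[OF G'(1)] continuous_on_subset[OF cF] nz) auto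
    have \<phi>kb: "norm (\<phi>k k x) \<le> 2*R1 + \<delta>0/\<eta> \<and> \<phi>k k x \<bullet> nG (G' x) \<ge> \<delta>0" if "x \<in> closure \<Omega>" for k x
    proof
      show "\<phi>k k x \<bullet> nG (G' x) \<ge> \<delta>0" unfolding \<phi>k_def \<psi>_def by (rule hp_inner[OF nz[OF that]])
      have "norm (\<phi>k k x) \<le> 2 * norm (cl R1 (F k x)) + \<delta>0 / norm (nG (G' x))"
        unfolding \<phi>k_def \<psi>_def by (rule hp_norm[OF nz[OF that] d0])
      also have "\<dots> \<le> 2 * R1 + \<delta>0 / \<eta>"
        using cl_norm[OF R1, of "F k x"] GK'(3)[OF that] eta d0
        by (intro add_mono divide_left_mono) (auto intro!: mult_pos_pos)
      finally show "norm (\<phi>k k x) \<le> 2*R1 + \<delta>0/\<eta>" .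
    qed
    define e0 where "e0 = min 1 (\<delta>0 / (2*N))"
    have e0: "0 < e0" "e0 \<le> 1" "e0 * N \<le> \<delta>0 / 2" using d0 Np by (auto simp: e0_def min_def field_simps)
    have exP: "\<forall>k. \<exists>g. polynomial_function g \<and> (\<forall>x\<in>closure \<Omega>. norm (\<phi>k k x - g x) < e0 * inverse (real (Suc k)))"
      using Stone_Weierstrass_polynomial_function[OF cO c\<phi>k] e0 by simp
    obtain P where P: "\<And>k. polynomial_function (P k)"
      "\<And>k x. x \<in> closure \<Omega> \<Longrightarrow> norm (\<phi>k k x - P k x) < e0 * inverse (real (Suc k))"
    proof -
      from choice[OF exP] obtain P where P0: "\<forall>k. polynomial_function (P k) \<and> (\<forall>x\<in>closure \<Omega>. norm (\<phi>k k x - P k x) < e0 * inverse (real (Suc k)))"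
        by (rule exE)
      show ?thesis by (rule that[of P]) (use P0 in simp_all)
    qed
    have Pb: "P k x \<bullet> nG (G' x) \<ge> \<delta>0 / 2 \<and> norm (P k x) \<le> \<beta>" if "x \<in> closure \<Omega>" for k x
    proof
      have le: "norm (\<phi>k k x - P k x) \<le> e0"
      proof -
        have "inverse (real (Suc k)) \<le> 1" by (simp add: inverse_le_1_iff)
        then have "e0 * inverse (real (Suc k)) \<le> e0 * 1" using e0 by (intro mult_left_mono) auto
        then show ?thesis using P(2)[OF that, of k] by simp
      qed
      have "(\<phi>k k x - P k x) \<bullet> nG (G' x) \<le> norm (\<phi>k k x - P k x) * norm (nG (G' x))"
        by (rule norm_cauchy_schwarz)
      also have "\<dots> \<le> e0 * N" using le GK'(2)[OF that] e0 by (intro mult_mono) auto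
      finally have "(\<phi>k k x - P k x) \<bullet> nG (G' x) \<le> \<delta>0 / 2" using e0 by simp
      then show "P k x \<bullet> nG (G' x) \<ge> \<delta>0 / 2" using \<phi>kb[OF that, of k] by (simp add: inner_diff_left)
      have "norm (P k x) \<le> norm (\<phi>k k x) + norm (\<phi>k k x - P k x)"
        by (metis norm_minus_commute norm_triangle_sub)
      also have "\<dots> \<le> 2*R1 + \<delta>0/\<eta> + 1" using \<phi>kb[OF that, of k] le e0 by simp
      also have "\<dots> \<le> \<beta>" by (simp add: beta)
      finally show "norm (P k x) \<le> \<beta>" .
    qed
    have b2: "2 / \<delta>0 \<le> \<beta>" by (simp add: beta)
    have b0: "2 / \<delta>0 > 0" using d0 by simp
    have bp1: "\<beta> > 0" using b2 b0 by linarith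
    have "1 / \<beta> \<le> 1 / (2 / \<delta>0)" using b2 b0 bp1 by (intro divide_left_mono) (auto intro!: mult_pos_pos)
    then have bp: "\<beta> > 0" "1 / \<beta> \<le> \<delta>0 / 2" using bp1 by auto
    have PC: "P k \<in> C" for k
      unfolding C_def
    proof (intro CollectI conjI ballI)
      show "smooth (P k)" by (rule poly_smooth[OF P(1)])
    next
      fix x assume x: "x \<in> closure \<Omega>"
      show "det (augm (G x) (P k x)) \<ge> 1 / \<beta>"
        using Pb[OF x, of k] bp G'(2)[OF x] by (simp add: det_augm_nG)
      show "norm (P k x) \<le> \<beta>" using Pb[OF x, of k] by simp
    qed
    define u where "u k x = W (augm (G' x) (P k x)) * indicator \<Omega> x" for k x
    define u' where "u' x = W (augm (G' x) (\<phi>0 x)) * indicator \<Omega> x" for x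
    have Rle: "?R \<le> integral\<^sup>N lborel (u k)" for k
    proof -
      have "?R \<le> (\<integral>\<^sup>+ x. W (augm (G x) (P k x)) * indicator \<Omega> x \<partial>lborel)"
        using PC[of k] unfolding C_def by (rule INF_lower)
      also have "\<dots> = integral\<^sup>N lborel (u k)"
        unfolding u_def using G'(2) closure_subset[of \<Omega>]
        by (intro nn_integral_cong) (auto simp: indicator_def subset_iff)
      finally show ?thesis .
    qed
    obtain c where c: "\<And>F. det F \<ge> \<delta>0 / 2 \<Longrightarrow> W F \<le> ennreal (c * (1 + norm F powr p))"
      using H5[of "\<delta>0 / 2"] d0 by auto
    define B where "B = \<bar>c\<bar> * (1 + (M + \<beta>) powr p)"
    have ub: "W (augm (G' x) (P k x)) \<le> ennreal B" if x: "x \<in> closure \<Omega>" for k x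
    proof -
      let ?F = "augm (G' x) (P k x)"
      have "det ?F \<ge> \<delta>0 / 2" using Pb[OF x, of k] by (simp add: det_augm_nG)
      then have "W ?F \<le> ennreal (c * (1 + norm ?F powr p))" by (rule c)
      also have "c * (1 + norm ?F powr p) \<le> B"
      proof -
        have "norm ?F \<le> norm (G' x) + norm (P k x)" by (rule norm_augm_le)
        also have "\<dots> \<le> M + \<beta>" using normG[OF x] G'(2)[OF x] Pb[OF x, of k] by simp
        finally have "norm ?F powr p \<le> (M + \<beta>) powr p" using p by (intro powr_mono2) auto
        moreover have "c * (1 + norm ?F powr p) \<le> \<bar>c\<bar> * (1 + norm ?F powr p)"
          by (intro mult_right_mono) auto
        moreover have "\<bar>c\<bar> * (1 + norm ?F powr p) \<le> \<bar>c\<bar> * (1 + (M + \<beta>) powr p)"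
          using calculation(1) by (intro mult_left_mono) auto
        ultimately show ?thesis unfolding B_def by linarith
      qed
      then have "ennreal (c * (1 + norm ?F powr p)) \<le> ennreal B" by (rule ennreal_leI)
      finally show ?thesis .
    qed
    have conv: "(\<lambda>k. u k x) \<longlonglongrightarrow> u' x" if "x \<notin> Nn" for x
    proof (cases "x \<in> \<Omega>")
      case False then show ?thesis by (simp add: u_def u'_def)
    next
      case True
      then have x: "x \<in> closure \<Omega>" using closure_subset by blast
      have lF: "(\<lambda>n. F n x) \<longlonglongrightarrow> \<phi>0 x" using limF[OF that] True by simp
      have c\<psi>: "continuous_on UNIV (\<psi> x)"
        unfolding \<psi>_def by (intro continuous_intros R1 nz[OF x])
      have "(\<lambda>k. \<phi>k k x) \<longlonglongrightarrow> \<psi> x (\<phi>0 x)"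
        unfolding \<phi>k_def by (rule continuous_on_tendsto_compose[OF c\<psi> lF]) auto
      moreover have "\<psi> x (\<phi>0 x) = \<phi>0 x"
        using \<phi>0b[OF x] R1 unfolding \<psi>_def by (simp add: cl_id hp_id)
      ultimately have l1: "(\<lambda>k. \<phi>k k x) \<longlonglongrightarrow> \<phi>0 x" by simp
      have lim0: "(\<lambda>k. e0 * inverse (real (Suc k))) \<longlonglongrightarrow> 0"
        using tendsto_mult[OF tendsto_const LIMSEQ_inverse_real_of_nat, of e0] by simp
      have "norm (\<phi>k k x - P k x) \<le> e0 * inverse (real (Suc k))" for k
        using P(2)[OF x, of k] by simp
      then have ev: "\<forall>\<^sub>F k in sequentially. norm (\<phi>k k x - P k x) \<le> e0 * inverse (real (Suc k))"
        by (intro always_eventually allI)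
      have "(\<lambda>k. \<phi>k k x - P k x) \<longlonglongrightarrow> 0"
        by (rule Lim_null_comparison[OF ev lim0])
      then have "(\<lambda>k. \<phi>k k x - (\<phi>k k x - P k x)) \<longlonglongrightarrow> \<phi>0 x - 0"
        by (intro tendsto_diff l1)
      then have lP: "(\<lambda>k. P k x) \<longlonglongrightarrow> \<phi>0 x" by simp
      have cW: "continuous_on UNIV (\<lambda>\<zeta>. W (augm (G' x) \<zeta>))"
        by (rule continuous_on_compose2[OF H1]) (auto intro!: continuous_intros)
      have "(\<lambda>k. W (augm (G' x) (P k x))) \<longlonglongrightarrow> W (augm (G' x) (\<phi>0 x))"
        by (rule continuous_on_tendsto_compose[OF cW lP]) auto
      then show ?thesis using True by (simp add: u_def u'_def)
    qed
    have mu[measurable]: "u k \<in> borel_measurable borel" for k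
    proof -
      have "(\<lambda>x. W (augm (G' x) (P k x))) \<in> borel_measurable borel"
        by (rule borel_measurable_continuous_onI, rule cWG, rule continuous_on_polymonial_function, rule P(1))
      then show ?thesis unfolding u_def by measurable
    qed
    have mu'[measurable]: "u' \<in> borel_measurable borel"
    proof -
      have "(\<lambda>x. W (augm (G' x) (d (kk x)))) \<in> borel_measurable borel"
        by (rule measurable_compose_countable[where f="\<lambda>i x. W (augm (G' x) (d i))"]) auto
      then show ?thesis unfolding u'_def \<phi>0_def by measurable
    qed
    have lim: "(\<lambda>k. integral\<^sup>N lborel (u k)) \<longlonglongrightarrow> integral\<^sup>N lborel u'"
    proof (rule nn_integral_dominated_convergence[where w="\<lambda>x. ennreal B * indicator \<Omega> x"])
      show "(\<lambda>x. ennreal B * indicator \<Omega> x) \<in> borel_measurable lborel" by measurable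
      show "u k \<in> borel_measurable lborel" for k by simp
      show "u' \<in> borel_measurable lborel" by simp
      show "AE x in lborel. u k x \<le> ennreal B * indicator \<Omega> x" for k
        using ub closure_subset[of \<Omega>] by (intro AE_I2) (auto simp: u_def indicator_def subset_iff)
      show "(\<integral>\<^sup>+ x. ennreal B * indicator \<Omega> x \<partial>lborel) < \<infinity>"
        using fin by (simp add: nn_integral_cmult_indicator ennreal_mult_less_top)
      have "AE x in lebesgue. x \<notin> Nn" using Nn by (intro AE_not_in) (simp add: negligible_iff_null_sets)
      then have "AE x in lborel. x \<notin> Nn" by (simp add: AE_completion_iff)
      then show "AE x in lborel. (\<lambda>k. u k x) \<longlonglongrightarrow> u' x" by eventually_elim (rule conv)
    qed
    have "?R \<le> integral\<^sup>N lborel u'"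
      using lim by (rule LIMSEQ_le_const) (auto intro: Rle)
    also have "\<dots> \<le> (\<integral>\<^sup>+ x. (W0 W (G' x) + ennreal \<epsilon>) * indicator \<Omega> x \<partial>lborel)"
      unfolding u'_def using \<phi>0W closure_subset[of \<Omega>]
      by (intro nn_integral_mono) (auto simp: indicator_def subset_iff less_imp_le)
    finally show ?thesis .
  qed
  have split: "(\<integral>\<^sup>+ x. (W0 W (G' x) + ennreal \<epsilon>) * indicator \<Omega> x \<partial>lborel) = ?L + ennreal \<epsilon> * emeasure lborel \<Omega>"
    if "0 < \<epsilon>" for \<epsilon>
  proof -
    have "(\<integral>\<^sup>+ x. (W0 W (G' x) + ennreal \<epsilon>) * indicator \<Omega> x \<partial>lborel)
        = (\<integral>\<^sup>+ x. W0 W (G' x) * indicator \<Omega> x + ennreal \<epsilon> * indicator \<Omega> x \<partial>lborel)"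
      by (simp add: distrib_right)
    also have "\<dots> = (\<integral>\<^sup>+ x. W0 W (G' x) * indicator \<Omega> x \<partial>lborel) + (\<integral>\<^sup>+ x. ennreal \<epsilon> * indicator \<Omega> x \<partial>lborel)"
      using mOm by (intro nn_integral_add) measurable
    also have "(\<integral>\<^sup>+ x. W0 W (G' x) * indicator \<Omega> x \<partial>lborel) = ?L"
      using G'(2) closure_subset[of \<Omega>] by (intro nn_integral_cong) (auto simp: indicator_def subset_iff)
    also have "(\<integral>\<^sup>+ x. ennreal \<epsilon> * indicator \<Omega> x \<partial>lborel) = ennreal \<epsilon> * emeasure lborel \<Omega>"
      using mOm by (intro nn_integral_cmult_indicator) simp
    finally show ?thesis .
  qed
  show ?thesis
  proof (rule ennreal_le_epsilon)
    fix e :: real assume "?L < top" "0 < e"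
    define m where "m = enn2real (emeasure lborel \<Omega>)"
    have m: "emeasure lborel \<Omega> = ennreal m" "m \<ge> 0" using fin by (auto simp: m_def ennreal_enn2real_if)
    define \<epsilon> where "\<epsilon> = min 1 (e / (m + 1))"
    have ep: "0 < \<epsilon>" "\<epsilon> \<le> 1" using \<open>0 < e\<close> m(2) by (auto simp: \<epsilon>_def)
    have "\<epsilon> * m \<le> e / (m + 1) * m" using m(2) by (intro mult_right_mono) (auto simp: \<epsilon>_def)
    also have "\<dots> \<le> e" using m(2) \<open>0 < e\<close> by (simp add: field_simps)
    finally have em: "\<epsilon> * m \<le> e" .
    have "?R \<le> ?L + ennreal \<epsilon> * emeasure lborel \<Omega>" using core[OF ep] split[OF ep(1)] by simp
    also have "ennreal \<epsilon> * emeasure lborel \<Omega> = ennreal (\<epsilon> * m)" using m ep by (simp add: ennreal_mult)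
    also have "\<dots> \<le> ennreal e" using em by (rule ennreal_leI)
    finally show "?R \<le> ?L + ennreal e" by - (simp add: add_left_mono)
  qed
qed

theorem corollary4p8:
  fixes W :: "real^3^3 \<Rightarrow> ennreal" and p :: real
  assumes p: "1 < p"
    and H1: "continuous_on UNIV W"
    and H2: "\<And>R F. rotation_matrix R \<Longrightarrow> W (R ** F) = W F"
    and H3a: "\<And>F. det F > 0 \<Longrightarrow> W F < \<infinity>"
    and H3b: "\<And>F. det F \<le> 0 \<Longrightarrow> W F = \<infinity>"
    and H4: "\<exists>C1>0. \<forall>F. W F \<ge> ennreal (C1 * norm F powr p - 1 / C1)"
    and H5: "\<And>\<delta>. \<delta> > 0 \<Longrightarrow> \<exists>c. \<forall>F. det F \<ge> \<delta> \<longrightarrow> W F \<le> ennreal (c * (1 + norm F powr p))"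
  shows "\<forall>\<eta>>0. \<forall>M. \<exists>\<beta>>0. \<forall>(\<Omega>::(real^2) set) (G::real^2 \<Rightarrow> real^2^3).
           open \<Omega> \<and> bounded \<Omega> \<and> uniformly_continuous_on (closure \<Omega>) G
           \<and> (\<forall>x\<in>closure \<Omega>. norm (cross3 (column 1 (G x)) (column 2 (G x))) \<ge> \<eta>)
           \<and> (SUP x\<in>closure \<Omega>. norm (G x)) = M
         \<longrightarrow> (\<integral>\<^sup>+ x. W0 W (G x) * indicator \<Omega> x \<partial>lborel)
             = (INF \<phi>\<in>{\<phi>. smooth \<phi> \<and> (\<forall>x\<in>closure \<Omega>. det (augm (G x) (\<phi> x)) \<ge> 1 / \<beta>)
                            \<and> (\<forall>x\<in>closure \<Omega>. norm (\<phi> x) \<le> \<beta>)}.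
                  (\<integral>\<^sup>+ x. W (augm (G x) (\<phi> x)) * indicator \<Omega> x \<partial>lborel))"
  proof (intro allI impI)
  fix \<eta> :: real and M :: real
  assume eta: "\<eta> > 0"
  obtain K0 R1 \<delta>0 N where K0: "K0 \<ge> 0" and R1: "R1 > 0" and d0: "\<delta>0 > 0" and Np: "N > 0"
    and hA: "\<forall>A. norm A \<le> M \<and> \<eta> \<le> norm (nG A) \<longrightarrow> W0 W A \<le> ennreal K0 \<and> norm (nG A) \<le> N"
    and hF: "\<forall>F. W F \<le> ennreal (K0+1) \<longrightarrow> norm F \<le> R1 \<and> \<delta>0 \<le> det F"
    using constants[OF p H1 H3a H3b H4 eta, of M] by blast
  define \<beta> where "\<beta> = max (2*R1 + \<delta>0/\<eta> + 1) (2/\<delta>0)"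
  have bpos: "\<beta> > 0" using d0 by (simp add: \<beta>_def less_max_iff_disj)
  show "\<exists>\<beta>>0. \<forall>(\<Omega>::(real^2) set) (G::real^2 \<Rightarrow> real^2^3).
           open \<Omega> \<and> bounded \<Omega> \<and> uniformly_continuous_on (closure \<Omega>) G
           \<and> (\<forall>x\<in>closure \<Omega>. norm (cross3 (column 1 (G x)) (column 2 (G x))) \<ge> \<eta>)
           \<and> (SUP x\<in>closure \<Omega>. norm (G x)) = M
         \<longrightarrow> (\<integral>\<^sup>+ x. W0 W (G x) * indicator \<Omega> x \<partial>lborel)
             = (INF \<phi>\<in>{\<phi>. smooth \<phi> \<and> (\<forall>x\<in>closure \<Omega>. det (augm (G x) (\<phi> x)) \<ge> 1 / \<beta>)
                            \<and> (\<forall>x\<in>closure \<Omega>. norm (\<phi> x) \<le> \<beta>)}.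
                  (\<integral>\<^sup>+ x. W (augm (G x) (\<phi> x)) * indicator \<Omega> x \<partial>lborel))"
  proof (rule exI[of _ \<beta>], intro conjI allI impI)
    show "\<beta> > 0" by (fact bpos)
  next
    fix \<Omega> :: "(real^2) set" and G :: "real^2 \<Rightarrow> real^2^3"
    assume hyp: "open \<Omega> \<and> bounded \<Omega> \<and> uniformly_continuous_on (closure \<Omega>) G
           \<and> (\<forall>x\<in>closure \<Omega>. norm (cross3 (column 1 (G x)) (column 2 (G x))) \<ge> \<eta>)
           \<and> (SUP x\<in>closure \<Omega>. norm (G x)) = M"
    show "(\<integral>\<^sup>+ x. W0 W (G x) * indicator \<Omega> x \<partial>lborel)
             = (INF \<phi>\<in>{\<phi>. smooth \<phi> \<and> (\<forall>x\<in>closure \<Omega>. det (augm (G x) (\<phi> x)) \<ge> 1 / \<beta>)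
                            \<and> (\<forall>x\<in>closure \<Omega>. norm (\<phi> x) \<le> \<beta>)}.
                  (\<integral>\<^sup>+ x. W (augm (G x) (\<phi> x)) * indicator \<Omega> x \<partial>lborel))"
    proof (rule antisym)
      show "(\<integral>\<^sup>+ x. W0 W (G x) * indicator \<Omega> x \<partial>lborel)
             \<le> (INF \<phi>\<in>{\<phi>. smooth \<phi> \<and> (\<forall>x\<in>closure \<Omega>. det (augm (G x) (\<phi> x)) \<ge> 1 / \<beta>)
                            \<and> (\<forall>x\<in>closure \<Omega>. norm (\<phi> x) \<le> \<beta>)}.
                  (\<integral>\<^sup>+ x. W (augm (G x) (\<phi> x)) * indicator \<Omega> x \<partial>lborel))"
      proof (rule INF_greatest)
        fix \<phi> :: "real^2 \<Rightarrow> real^3"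
        show "(\<integral>\<^sup>+ x. W0 W (G x) * indicator \<Omega> x \<partial>lborel) \<le> (\<integral>\<^sup>+ x. W (augm (G x) (\<phi> x)) * indicator \<Omega> x \<partial>lborel)"
          by (intro nn_integral_mono mult_right_mono W0_le) simp
      qed
      show "(INF \<phi>\<in>{\<phi>. smooth \<phi> \<and> (\<forall>x\<in>closure \<Omega>. det (augm (G x) (\<phi> x)) \<ge> 1 / \<beta>)
                            \<and> (\<forall>x\<in>closure \<Omega>. norm (\<phi> x) \<le> \<beta>)}.
                  (\<integral>\<^sup>+ x. W (augm (G x) (\<phi> x)) * indicator \<Omega> x \<partial>lborel))
            \<le> (\<integral>\<^sup>+ x. W0 W (G x) * indicator \<Omega> x \<partial>lborel)"
        using hyp by (intro main_upper[OF p H1 H5 eta K0 R1 d0 Np hA hF \<beta>_def]) auto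
    qed
  qed
qed

end
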